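(* Let $F,E$ be Archimedean vector lattices and $T:F\to E$ a lattice homomorphism. The following are equivalent: (i) $T$ maps nets decreasing to $0_{F}$ into nets decreasing to $0_{E}$; (ii) $T$ preserves suprema and infima of arbitrary sets (if $G\subset F$ and $g=\bigvee G$, then $Tg=\bigvee TG$, and similarly for infima); (iii) $T$ is order continuous; (iv) there is an ideal $H\subset F$ such that $T|_{H}$ is order continuous (with respect to the order convergence of $H$) and $TF\subset (TH)^{dd}$; (v) $T$ is uo-continuous.
   Context: A lattice homomorphism is a linear map with $T|f|=|Tf|$ for all $f$. A net $(f_\alpha)$ order converges to $f$ ($f_\alpha\xrightarrow{o}f$) if there is $G$ with $\bigwedge G=0$ such that for every $g\in G$ there is $\alpha_0$ with $|f_\alpha-f|\le g$ for $\alpha\ge\alpha_0$. A net uo-converges to $f$ if $|f_\alpha-f|\wedge g\xrightarrow{o}0$ for every $g\ge 0$. An operator is order continuous (uo-continuous) if it maps order (uo) convergent nets to order (uo) convergent nets with the image of the limit as limit. For $G\subset E$, $G^d=\{e\in E: |e|\wedge|g|=0\ \forall g\in G\}$ and $G^{dd}=(G^d)^d$ is the band generated by $G$. *)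

theory Defs
  imports Complex_Main "HOL-Library.Lattice_Algebras"
begin

class vector_lattice = ordered_real_vector + lattice_ab_group_add_abs

class archimedean_vector_lattice = vector_lattice +
  assumes archimedean: "0 \<le> x \<Longrightarrow> (\<forall>n::nat. real n *\<^sub>R x \<le> y) \<Longrightarrow> x = 0"

definition is_inf_on :: "'a::order set \<Rightarrow> 'a set \<Rightarrow> 'a \<Rightarrow> bool" where
  "is_inf_on A S x \<longleftrightarrow> x \<in> A \<and> (\<forall>s\<in>S. x \<le> s) \<and> (\<forall>y\<in>A. (\<forall>s\<in>S. y \<le> s) \<longrightarrow> y \<le> x)"

definition is_sup_on :: "'a::order set \<Rightarrow> 'a set \<Rightarrow> 'a \<Rightarrow> bool" where
  "is_sup_on A S x \<longleftrightarrow> x \<in> A \<and> (\<forall>s\<in>S. s \<le> x) \<and> (\<forall>y\<in>A. (\<forall>s\<in>S. s \<le> y) \<longrightarrow> x \<le> y)"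

abbreviation is_inf :: "'a::order set \<Rightarrow> 'a \<Rightarrow> bool" where "is_inf \<equiv> is_inf_on UNIV"
abbreviation is_sup :: "'a::order set \<Rightarrow> 'a \<Rightarrow> bool" where "is_sup \<equiv> is_sup_on UNIV"

definition down_directed :: "'a::order set \<Rightarrow> bool" where
  "down_directed D \<longleftrightarrow> (\<forall>x\<in>D. \<forall>y\<in>D. \<exists>z\<in>D. z \<le> x \<and> z \<le> y)"

text \<open>Nets are represented by filters on the space: a net (f_\<alpha>) corresponds to the
  filter generated by its tails {f_\<beta> | \<beta> \<ge> \<alpha>}; every proper filter arises this way.\<close>
definition oconv_on :: "'a::vector_lattice set \<Rightarrow> 'a filter \<Rightarrow> 'a \<Rightarrow> bool" where
  "oconv_on A \<F> f \<longleftrightarrow>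
     (\<exists>G. G \<subseteq> A \<and> is_inf_on A G 0 \<and> (\<forall>g\<in>G. \<forall>\<^sub>F x in \<F>. \<bar>x - f\<bar> \<le> g))"

abbreviation oconv :: "'a::vector_lattice filter \<Rightarrow> 'a \<Rightarrow> bool" where
  "oconv \<equiv> oconv_on UNIV"

definition uoconv :: "'a::vector_lattice filter \<Rightarrow> 'a \<Rightarrow> bool" where
  "uoconv \<F> f \<longleftrightarrow> (\<forall>g. 0 \<le> g \<longrightarrow> oconv (filtermap (\<lambda>x. inf \<bar>x - f\<bar> g) \<F>) 0)"

definition lattice_hom :: "('a::vector_lattice \<Rightarrow> 'b::vector_lattice) \<Rightarrow> bool" where
  "lattice_hom T \<longleftrightarrow> linear T \<and> (\<forall>f. T \<bar>f\<bar> = \<bar>T f\<bar>)"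

definition order_continuous_on ::
  "'a::vector_lattice set \<Rightarrow> ('a \<Rightarrow> 'b::vector_lattice) \<Rightarrow> bool" where
  "order_continuous_on A T \<longleftrightarrow>
     (\<forall>\<F> f. \<F> \<noteq> bot \<and> eventually (\<lambda>x. x \<in> A) \<F> \<and> f \<in> A \<and> oconv_on A \<F> f
        \<longrightarrow> oconv (filtermap T \<F>) (T f))"

abbreviation order_continuous where "order_continuous \<equiv> order_continuous_on UNIV"

definition uo_continuous :: "('a::vector_lattice \<Rightarrow> 'b::vector_lattice) \<Rightarrow> bool" where
  "uo_continuous T \<longleftrightarrow>
     (\<forall>\<F> f. \<F> \<noteq> bot \<and> uoconv \<F> f \<longrightarrow> uoconv (filtermap T \<F>) (T f))"

definition vl_ideal :: "'a::vector_lattice set \<Rightarrow> bool" where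
  "vl_ideal H \<longleftrightarrow> 0 \<in> H \<and> (\<forall>x\<in>H. \<forall>y\<in>H. x + y \<in> H) \<and> (\<forall>c. \<forall>x\<in>H. c *\<^sub>R x \<in> H)
     \<and> (\<forall>x y. y \<in> H \<and> \<bar>x\<bar> \<le> \<bar>y\<bar> \<longrightarrow> x \<in> H)"

definition disj_compl :: "'a::vector_lattice set \<Rightarrow> 'a set" where
  "disj_compl G = {e. \<forall>g\<in>G. inf \<bar>e\<bar> \<bar>g\<bar> = 0}"

end

theory Submission
  imports Defs
begin

lemma is_inf_empty_triv:
  assumes "is_inf {} (0::'a::vector_lattice)" shows "(x::'a) = 0"
proof -
  have 1: "x \<le> 0" using assms unfolding is_inf_on_def by blast
  have "- x \<le> 0" using assms unfolding is_inf_on_def by blast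
  hence 2: "0 \<le> x" by simp
  show ?thesis using 1 2 by (rule order_antisym)
qed

lemma is_inf_ge0: "is_inf G (0::'a::{order,zero}) \<Longrightarrow> g \<in> G \<Longrightarrow> 0 \<le> g"
  unfolding is_inf_on_def by auto

lemma pprt_twice: "(x::'a::lattice_ab_group_add_abs) + \<bar>x\<bar> = pprt x + pprt x"
proof -
  have "x = pprt x + nprt x" by (rule prts)
  moreover have "\<bar>x\<bar> = pprt x - nprt x" by (rule abs_prts)
  ultimately show ?thesis by (metis add.commute add.left_commute diff_add_cancel)
qed

lemma sup_pprt: "sup u v = u + pprt (v - u)" for u :: "'c::lattice_ab_group_add_abs"
    unfolding pprt_def by (simp add: add_sup_distrib_left sup_commute)

definition tailf :: "'a::order set \<Rightarrow> 'a filter" where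
  "tailf D = (INF a\<in>D. principal {x\<in>D. x \<le> a})"

lemma tailf_ev:
  assumes "D \<noteq> {}" "down_directed D"
  shows "eventually P (tailf D) \<longleftrightarrow> (\<exists>a\<in>D. \<forall>x\<in>D. x \<le> a \<longrightarrow> P x)"
proof -
  have "eventually P (tailf D) \<longleftrightarrow> (\<exists>a\<in>D. eventually P (principal {x\<in>D. x \<le> a}))"
    unfolding tailf_def
  proof (rule eventually_INF_base[OF assms(1)])
    fix a b assume "a \<in> D" "b \<in> D"
    then obtain z where "z \<in> D" "z \<le> a" "z \<le> b" using assms(2) unfolding down_directed_def by blast
    thus "\<exists>x\<in>D. principal {y \<in> D. y \<le> x} \<le> inf (principal {x \<in> D. x \<le> a}) (principal {x \<in> D. x \<le> b})"
      by (intro bexI[of _ z]) auto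
  qed
  thus ?thesis by (auto simp add: eventually_principal)
qed

lemma tailf_nbot:
  assumes "D \<noteq> {}" "down_directed D"
  shows "tailf D \<noteq> bot"
proof
  assume "tailf D = bot"
  hence "eventually (\<lambda>x. False) (tailf D)" by simp
  thus False using tailf_ev[OF assms] by auto
qed

lemma tailf_in:
  assumes "D \<noteq> {}" "down_directed D"
  shows "eventually (\<lambda>x. x \<in> D) (tailf D)"
  using tailf_ev[OF assms] assms(1) by auto

lemma is_inf_insert: "is_inf S m \<Longrightarrow> is_inf (insert x S) (inf x (m::'a::lattice))"
  unfolding is_inf_on_def by (auto intro: le_infI2)

lemma is_sup_neg: "is_sup G g \<longleftrightarrow> is_inf (uminus ` G) (- (g::'a::ordered_ab_group_add))"
  unfolding is_inf_on_def is_sup_on_def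
  by (auto, metis minus_minus neg_le_iff_le, metis minus_minus neg_le_iff_le)

context
  fixes T :: "'a::vector_lattice \<Rightarrow> 'b::vector_lattice"
  assumes hom: "lattice_hom T"
begin

lemma lin: "linear T" using hom unfolding lattice_hom_def by simp
lemma habs: "T \<bar>x\<bar> = \<bar>T x\<bar>" using hom unfolding lattice_hom_def by simp
lemma hadd: "T (x + y) = T x + T y" by (rule linear_add[OF lin])
lemma hdiff: "T (x - y) = T x - T y" by (rule linear_diff[OF lin])
lemma hneg: "T (- x) = - T x" by (rule linear_neg[OF lin])
lemma h0: "T 0 = 0" by (rule linear_0[OF lin])
lemma hscale: "T (c *\<^sub>R x) = c *\<^sub>R T x" by (rule linear_scale[OF lin])

lemma hpos: "0 \<le> x \<Longrightarrow> 0 \<le> T x"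
proof -
  assume "0 \<le> x"
  hence "T x = T \<bar>x\<bar>" by (simp only: abs_of_nonneg)
  also have "\<dots> = \<bar>T x\<bar>" by (rule habs)
  finally have eq: "T x = \<bar>T x\<bar>" .
  show "0 \<le> T x" using abs_ge_zero[of "T x"] eq[symmetric] by (rule back_subst[of "\<lambda>u. 0 \<le> u"])
qed

lemma hmono: "x \<le> y \<Longrightarrow> T x \<le> T y"
proof -
  assume "x \<le> y"
  hence "0 \<le> T (y - x)" by (intro hpos) (simp only: diff_ge_0_iff_ge)
  hence "0 \<le> T y - T x" by (simp only: hdiff)
  thus ?thesis by (simp only: diff_ge_0_iff_ge)
qed

lemma double_cancel: "a + a = b + b \<Longrightarrow> a = (b::'c::real_vector)"
proof -
  assume "a + a = b + b"
  hence "(2::real) *\<^sub>R a = (2::real) *\<^sub>R b" by (simp only: scaleR_2)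
  hence "(1/2::real) *\<^sub>R ((2::real) *\<^sub>R a) = (1/2::real) *\<^sub>R ((2::real) *\<^sub>R b)" by (rule arg_cong)
  thus ?thesis by simp
qed

lemma hpprt: "T (pprt x) = pprt (T x)"
proof (rule double_cancel)
  have "T (pprt x) + T (pprt x) = T (pprt x + pprt x)" by (rule hadd[symmetric])
  also have "\<dots> = T (x + \<bar>x\<bar>)" by (simp only: pprt_twice)
  also have "\<dots> = T x + \<bar>T x\<bar>" by (simp only: hadd habs)
  also have "\<dots> = pprt (T x) + pprt (T x)" by (rule pprt_twice)
  finally show "T (pprt x) + T (pprt x) = pprt (T x) + pprt (T x)" .
qed

lemma hsup: "T (sup x y) = sup (T x) (T y)"
proof -
  have "T (sup x y) = T (x + pprt (y - x))" by (simp only: sup_pprt)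
  also have "\<dots> = T x + pprt (T y - T x)" by (simp only: hadd hpprt hdiff)
  also have "\<dots> = sup (T x) (T y)" by (simp only: sup_pprt)
  finally show ?thesis .
qed

lemma hinf: "T (inf x y) = inf (T x) (T y)"
proof -
  have "T (inf x y) = T (- sup (- x) (- y))" by (simp only: inf_eq_neg_sup)
  also have "\<dots> = - sup (- T x) (- T y)" by (simp only: hneg hsup)
  also have "\<dots> = inf (T x) (T y)" by (simp only: inf_eq_neg_sup)
  finally show ?thesis .
qed


lemma fin_inf: "finite S \<Longrightarrow> S \<noteq> {} \<Longrightarrow> \<exists>m. is_inf S m \<and> is_inf (T`S) (T m)"
proof (induction S rule: finite_ne_induct)
  case (singleton x)
  show ?case by (intro exI[of _ x]) (simp add: is_inf_on_def)
next
  case (insert x S)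
  then obtain m where "is_inf S m" "is_inf (T`S) (T m)" by blast
  thus ?case using is_inf_insert[of S m x] is_inf_insert[of "T`S" "T m" "T x"]
    by (intro exI[of _ "inf x m"]) (simp add: hinf)
qed

lemma P_inf:
  assumes P: "\<forall>D. D \<noteq> {} \<and> down_directed D \<and> is_inf D 0 \<longrightarrow> is_inf (T`D) 0"
    and G: "G \<noteq> {}" "is_inf G g"
  shows "is_inf (T`G) (T g)"
proof -
  define D where "D = {m - g | m S. finite S \<and> S \<noteq> {} \<and> S \<subseteq> G \<and> is_inf S m \<and> is_inf (T`S) (T m)}"
  have sing: "s - g \<in> D" if "s \<in> G" for s
    unfolding D_def using that by (intro CollectI exI[of _ s] exI[of _ "{s}"]) (simp add: is_inf_on_def)
  have "D \<noteq> {}" using G(1) sing by blast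
  moreover have "down_directed D"
    unfolding down_directed_def
  proof (intro ballI)
    fix a b assume "a \<in> D" "b \<in> D"
    then obtain m1 S1 m2 S2 where 1: "a = m1 - g" "finite S1" "S1 \<noteq> {}" "S1 \<subseteq> G" "is_inf S1 m1"
      and 2: "b = m2 - g" "finite S2" "S2 \<noteq> {}" "S2 \<subseteq> G" "is_inf S2 m2"
      unfolding D_def by blast
    obtain m where m: "is_inf (S1 \<union> S2) m" "is_inf (T`(S1 \<union> S2)) (T m)"
      using fin_inf[of "S1 \<union> S2"] 1 2 by auto
    have "m - g \<in> D" unfolding D_def using m 1 2 by blast
    moreover have "m \<le> m1" "m \<le> m2" using m(1) 1(5) 2(5) unfolding is_inf_on_def by auto
    ultimately show "\<exists>z\<in>D. z \<le> a \<and> z \<le> b" using 1 2 by (intro bexI[of _ "m - g"]) auto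
  qed
  moreover have "is_inf D 0"
    unfolding is_inf_on_def
  proof (intro conjI ballI allI impI)
    fix d assume "d \<in> D"
    then obtain m S where "d = m - g" "S \<noteq> {}" "S \<subseteq> G" "is_inf S m"
      unfolding D_def by blast
    moreover have "g \<le> m" using calculation G(2) unfolding is_inf_on_def by blast
    ultimately show "0 \<le> d" by simp
  next
    fix y assume y: "\<forall>s\<in>D. y \<le> s"
    have "y + g \<le> s" if "s \<in> G" for s
    proof -
      have "y \<le> s - g" using y sing[OF that] by blast
      thus ?thesis by (simp add: le_diff_eq)
    qed
    hence "y + g \<le> g" using G(2) unfolding is_inf_on_def by blast
    thus "y \<le> 0" by simp
  qed simp
  ultimately have TD: "is_inf (T`D) 0" using P by blast
  show ?thesis
    unfolding is_inf_on_def
  proof (intro conjI ballI allI impI)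
    fix t assume "t \<in> T`G"
    thus "T g \<le> t" using G(2) hmono unfolding is_inf_on_def by auto
  next
    fix z assume z: "\<forall>t\<in>T`G. z \<le> t"
    have "z - T g \<le> t" if "t \<in> T`D" for t
    proof -
      obtain m S where "t = T (m - g)" "S \<subseteq> G" "is_inf (T`S) (T m)"
        using \<open>t \<in> T`D\<close> unfolding D_def by blast
      moreover have "z \<le> T m" using calculation z unfolding is_inf_on_def by blast
      ultimately show ?thesis by (simp add: hdiff)
    qed
    hence "z - T g \<le> 0" using TD unfolding is_inf_on_def by blast
    thus "z \<le> T g" by simp
  qed simp
qed

lemma P_sup:
  assumes P: "\<forall>D. D \<noteq> {} \<and> down_directed D \<and> is_inf D 0 \<longrightarrow> is_inf (T`D) 0"
    and G: "G \<noteq> {}" "is_sup G g"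
  shows "is_sup (T`G) (T g)"
proof -
  have a1: "is_inf (uminus`G) (- g)" using G(2) by (simp only: is_sup_neg)
  have a2: "uminus`G \<noteq> {}" using G(1) by simp
  have "is_inf (T`uminus`G) (T (-g))" by (rule P_inf[OF P a2 a1])
  moreover have "T`uminus`G = uminus`T`G" by (simp only: image_image hneg)
  ultimately have "is_inf (uminus`T`G) (- T g)" by (simp only: hneg)
  thus ?thesis by (simp only: is_sup_neg)
qed

lemma P_oc:
  assumes P: "\<forall>D. D \<noteq> {} \<and> down_directed D \<and> is_inf D 0 \<longrightarrow> is_inf (T`D) 0"
  shows "order_continuous T"
  unfolding order_continuous_on_def
proof (intro allI impI)
  fix F :: "'a filter" and f assume "F \<noteq> bot \<and> eventually (\<lambda>x. x \<in> UNIV) F \<and> f \<in> UNIV \<and> oconv_on UNIV F f"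
  then obtain G where G: "is_inf G 0" "\<forall>g\<in>G. eventually (\<lambda>x. \<bar>x - f\<bar> \<le> g) F"
    unfolding oconv_on_def by auto
  show "oconv (filtermap T F) (T f)"
  proof (cases "G = {}")
    case True
    hence z: "x = 0" for x :: 'a using G(1) is_inf_empty_triv by blast
    have Tz: "T x = 0" for x using z[of x] h0 by simp
    show ?thesis unfolding oconv_on_def
      by (intro exI[of _ "{0}"]) (simp add: is_inf_on_def eventually_filtermap Tz)
  next
    case False
    have "is_inf (T`G) (T 0)" using P_inf[OF P False G(1)] .
    hence "is_inf (T`G) 0" by (simp add: h0)
    moreover have "eventually (\<lambda>y. \<bar>y - T f\<bar> \<le> t) (filtermap T F)" if tG: "t \<in> T`G" for t
    proof -
      obtain g where g: "g \<in> G" "t = T g" using tG by blast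
      show ?thesis unfolding eventually_filtermap
        using G(2) g by (auto elim!: eventually_mono simp: hdiff[symmetric] habs[symmetric] intro!: hmono)
    qed
    ultimately show ?thesis unfolding oconv_on_def by blast
  qed
qed

lemma oc_iv:
  assumes "order_continuous T"
  shows "\<exists>H. vl_ideal H \<and> order_continuous_on H T \<and> range T \<subseteq> disj_compl (disj_compl (T ` H))"
  using assms by (intro exI[of _ UNIV]) (auto simp: vl_ideal_def disj_compl_def inf_commute)

lemma iv_P:
  assumes H: "vl_ideal H" "order_continuous_on H T" "range T \<subseteq> disj_compl (disj_compl (T ` H))"
  shows "\<forall>D. D \<noteq> {} \<and> down_directed D \<and> is_inf D 0 \<longrightarrow> is_inf (T`D) 0"
proof (intro allI impI, elim conjE)
  fix D assume D: "D \<noteq> {}" "down_directed D" "is_inf D (0::'a)"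
  have Dpos: "0 \<le> d" if "d \<in> D" for d using D(3) that by (rule is_inf_ge0)
  show "is_inf (T`D) 0"
    unfolding is_inf_on_def
  proof (intro conjI ballI allI impI)
    fix t assume "t \<in> T`D" thus "0 \<le> t" using Dpos hpos by auto
  next
    fix z assume z: "\<forall>t\<in>T`D. z \<le> t"
    define p where "p = sup z 0"
    have p0: "0 \<le> p" unfolding p_def by simp
    have zp: "z \<le> p" unfolding p_def by (rule sup_ge1)
    have pT: "p \<le> T d" if "d \<in> D" for d using z that Dpos hpos unfolding p_def by auto
    obtain d0 where d0: "d0 \<in> D" using D(1) by blast
    have "p \<in> disj_compl (T`H)" unfolding disj_compl_def
    proof (intro CollectI ballI)
      fix t assume "t \<in> T`H"
      then obtain h where h: "h \<in> H" "t = T h" by blast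
      define h' where "h' = \<bar>h\<bar>"
      have solid: "\<And>x y. y \<in> H \<Longrightarrow> \<bar>x\<bar> \<le> \<bar>y\<bar> \<Longrightarrow> x \<in> H"
        using H(1) unfolding vl_ideal_def by blast
      have h'H: "h' \<in> H" unfolding h'_def by (rule solid[OF h(1)]) simp
      have h'0: "0 \<le> h'" unfolding h'_def by simp
      have th: "\<bar>t\<bar> = T h'" using h by (simp add: h'_def habs)
      define Dh where "Dh = (\<lambda>d. inf d h') ` D"
      have Dhpos: "0 \<le> x" if "x \<in> Dh" for x using that Dpos h'0 unfolding Dh_def by auto
      have DhH: "Dh \<subseteq> H"
      proof
        fix x assume "x \<in> Dh"
        moreover have "\<bar>x\<bar> \<le> \<bar>h'\<bar>" using calculation Dhpos h'0 unfolding Dh_def by auto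
        ultimately show "x \<in> H" using solid[OF h'H] by blast
      qed
      have Dh1: "Dh \<noteq> {}" using D(1) unfolding Dh_def by blast
      have Dh2: "down_directed Dh" unfolding down_directed_def
      proof (intro ballI)
        fix u v assume "u \<in> Dh" "v \<in> Dh"
        then obtain d1 d2 where d12: "d1 \<in> D" "d2 \<in> D" "u = inf d1 h'" "v = inf d2 h'"
          unfolding Dh_def by blast
        then obtain d3 where d3: "d3 \<in> D" "d3 \<le> d1" "d3 \<le> d2"
          using D(2) unfolding down_directed_def by blast
        have "inf d3 h' \<in> Dh" unfolding Dh_def using d3(1) by (rule imageI)
        moreover have "inf d3 h' \<le> u" unfolding d12(3) using d3(2) by (rule inf_mono) simp
        moreover have "inf d3 h' \<le> v" unfolding d12(4) using d3(3) by (rule inf_mono) simp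
        ultimately show "\<exists>z\<in>Dh. z \<le> u \<and> z \<le> v" by blast
      qed
      have "is_inf_on H Dh 0"
        unfolding is_inf_on_def
      proof (intro conjI ballI allI impI)
        show "0 \<in> H" using H(1) unfolding vl_ideal_def by blast
      next
        fix x assume "x \<in> Dh" thus "0 \<le> x" by (rule Dhpos)
      next
        fix y assume "y \<in> H" "\<forall>s\<in>Dh. y \<le> s"
        hence "y \<le> d" if "d \<in> D" for d
        proof -
          have "y \<le> inf d h'" using \<open>\<forall>s\<in>Dh. y \<le> s\<close> that unfolding Dh_def by blast
          thus ?thesis by (rule le_infE)
        qed
        thus "y \<le> 0" using D(3) unfolding is_inf_on_def by blast
      qed
      moreover have "\<forall>g\<in>Dh. eventually (\<lambda>x. \<bar>x - 0\<bar> \<le> g) (tailf Dh)"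
        using Dhpos by (auto simp: tailf_ev[OF Dh1 Dh2])
      ultimately have "oconv_on H (tailf Dh) 0" unfolding oconv_on_def using DhH by blast
      moreover have "eventually (\<lambda>x. x \<in> H) (tailf Dh)"
        using tailf_in[OF Dh1 Dh2] DhH by (auto elim: eventually_mono)
      moreover have "(0::'a) \<in> H" using H(1) unfolding vl_ideal_def by blast
      ultimately have "oconv (filtermap T (tailf Dh)) (T 0)"
        using H(2) tailf_nbot[OF Dh1 Dh2] unfolding order_continuous_on_def by blast
      then obtain G' where G': "is_inf G' 0" "\<forall>g\<in>G'. eventually (\<lambda>y. \<bar>y - T 0\<bar> \<le> g) (filtermap T (tailf Dh))"
        unfolding oconv_on_def by (auto simp: h0)
      define w where "w = inf p (T h')"
      have "w \<le> g" if gG: "g \<in> G'" for g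
      proof -
        have "\<exists>a\<in>Dh. \<forall>x\<in>Dh. x \<le> a \<longrightarrow> \<bar>T x\<bar> \<le> g"
          using G'(2) gG by (auto simp: eventually_filtermap tailf_ev[OF Dh1 Dh2] h0)
        then obtain a where a: "a \<in> Dh" "\<forall>x\<in>Dh. x \<le> a \<longrightarrow> \<bar>T x\<bar> \<le> g" by blast
        obtain d where d: "d \<in> D" "a = inf d h'" using a(1) unfolding Dh_def by blast
        have "w \<le> T a" unfolding w_def d(2) hinf by (rule inf_mono[OF pT[OF d(1)] order_refl])
        also have "\<dots> \<le> \<bar>T a\<bar>" by (rule abs_ge_self)
        also have "\<dots> \<le> g" using a by auto
        finally show ?thesis .
      qed
      hence "w \<le> 0" using G'(1) unfolding is_inf_on_def by blast
      moreover have "0 \<le> w" unfolding w_def using p0 hpos[OF h'0] by simp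
      ultimately have "w = 0" by simp
      thus "inf \<bar>p\<bar> \<bar>t\<bar> = 0" using p0 th unfolding w_def by simp
    qed
    moreover have "T d0 \<in> disj_compl (disj_compl (T`H))" using H(3) by auto
    ultimately have "inf \<bar>T d0\<bar> \<bar>p\<bar> = 0" unfolding disj_compl_def by blast
    moreover have "inf \<bar>T d0\<bar> \<bar>p\<bar> = p" using pT[OF d0] p0 hpos[OF Dpos[OF d0]]
      by (simp add: inf_absorb2)
    ultimately have "p = 0" by simp
    thus "z \<le> 0" using zp by simp
  qed simp
qed

lemma uo_P:
  assumes U: "uo_continuous T"
  shows "\<forall>D. D \<noteq> {} \<and> down_directed D \<and> is_inf D 0 \<longrightarrow> is_inf (T`D) 0"
proof (intro allI impI, elim conjE)
  fix D assume D: "D \<noteq> {}" "down_directed D" "is_inf D (0::'a)"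
  have Dpos: "0 \<le> d" if "d \<in> D" for d using D(3) that by (rule is_inf_ge0)
  show "is_inf (T`D) 0"
    unfolding is_inf_on_def
  proof (intro conjI ballI allI impI)
    fix t assume "t \<in> T`D" thus "0 \<le> t" using Dpos hpos by auto
  next
    fix z assume z: "\<forall>t\<in>T`D. z \<le> t"
    define p where "p = sup z 0"
    have p0: "0 \<le> p" unfolding p_def by simp
    have zp: "z \<le> p" unfolding p_def by (rule sup_ge1)
    have pT: "p \<le> T d" if "d \<in> D" for d using z that Dpos hpos unfolding p_def by auto
    have "uoconv (tailf D) 0" unfolding uoconv_def oconv_on_def
    proof (intro allI impI exI[of _ D] conjI ballI)
      show "is_inf D 0" by (rule D(3))
    next
      fix g :: 'a and d assume "0 \<le> g" "d \<in> D"
      show "eventually (\<lambda>y. \<bar>y - 0\<bar> \<le> d) (filtermap (\<lambda>x. inf \<bar>x - 0\<bar> g) (tailf D))"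
        unfolding eventually_filtermap tailf_ev[OF D(1) D(2)]
        using \<open>d \<in> D\<close> \<open>0 \<le> g\<close> Dpos by (auto intro!: bexI[of _ d] le_infI1)
    qed simp
    hence "uoconv (filtermap T (tailf D)) (T 0)"
      using U tailf_nbot[OF D(1) D(2)] unfolding uo_continuous_def by blast
    hence "oconv (filtermap (\<lambda>y. inf \<bar>y - T 0\<bar> p) (filtermap T (tailf D))) 0"
      unfolding uoconv_def using p0 by blast
    then obtain G' where G': "is_inf G' 0"
      "\<forall>g\<in>G'. eventually (\<lambda>u. \<bar>u - 0\<bar> \<le> g) (filtermap (\<lambda>y. inf \<bar>y - T 0\<bar> p) (filtermap T (tailf D)))"
      unfolding oconv_on_def by blast
    have "p \<le> g" if "g \<in> G'" for g
    proof -
      have "\<exists>a\<in>D. \<forall>x\<in>D. x \<le> a \<longrightarrow> \<bar>inf \<bar>T x\<bar> p\<bar> \<le> g"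
        using G'(2) that by (auto simp: eventually_filtermap tailf_ev[OF D(1) D(2)] h0)
      then obtain a where a: "a \<in> D" "\<forall>x\<in>D. x \<le> a \<longrightarrow> \<bar>inf \<bar>T x\<bar> p\<bar> \<le> g" by blast
      have "inf \<bar>T a\<bar> p = p" using pT[OF a(1)] hpos[OF Dpos[OF a(1)]] by (simp add: inf_absorb2)
      thus ?thesis using a p0 by force
    qed
    hence "p \<le> 0" using G'(1) unfolding is_inf_on_def by blast
    thus "z \<le> 0" using zp by simp
  qed simp
qed

end

lemma scale_sup: "0 \<le> c \<Longrightarrow> c *\<^sub>R sup x y = sup (c *\<^sub>R x) (c *\<^sub>R (y::'c::vector_lattice))"
proof (cases "c = 0")
  case False
  assume c: "0 \<le> c"
  hence cp: "0 < c" using False by simp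
  have ic: "0 \<le> 1/c" using cp by simp
  define M where "M = sup (c *\<^sub>R x) (c *\<^sub>R y)"
  have 1: "M \<le> c *\<^sub>R sup x y" unfolding M_def
    by (rule sup_least) (rule scaleR_left_mono[OF _ c], simp)+
  have ex: "(1/c) *\<^sub>R (c *\<^sub>R u) = u" for u :: 'c using cp by simp
  have "(1/c) *\<^sub>R (c *\<^sub>R x) \<le> (1/c) *\<^sub>R M" unfolding M_def by (rule scaleR_left_mono[OF sup_ge1 ic])
  hence x: "x \<le> (1/c) *\<^sub>R M" by (simp only: ex)
  have "(1/c) *\<^sub>R (c *\<^sub>R y) \<le> (1/c) *\<^sub>R M" unfolding M_def by (rule scaleR_left_mono[OF sup_ge2 ic])
  hence y: "y \<le> (1/c) *\<^sub>R M" by (simp only: ex)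
  have "sup x y \<le> (1/c) *\<^sub>R M" using x y by (rule sup_least)
  hence "c *\<^sub>R sup x y \<le> c *\<^sub>R ((1/c) *\<^sub>R M)" using c by (rule scaleR_left_mono)
  also have "c *\<^sub>R ((1/c) *\<^sub>R M) = M" using cp by simp
  finally have "c *\<^sub>R sup x y \<le> M" .
  thus ?thesis using 1 unfolding M_def by (rule order_antisym)
qed simp

lemma scale_inf: "0 \<le> c \<Longrightarrow> c *\<^sub>R inf x y = inf (c *\<^sub>R x) (c *\<^sub>R (y::'c::vector_lattice))"
proof -
  assume c: "0 \<le> c"
  have "c *\<^sub>R inf x y = c *\<^sub>R (- sup (- x) (- y))" by (simp only: inf_eq_neg_sup)
  also have "\<dots> = - (c *\<^sub>R sup (- x) (- y))" by (rule scaleR_minus_right)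
  also have "\<dots> = - sup (c *\<^sub>R (- x)) (c *\<^sub>R (- y))" by (simp only: scale_sup[OF c])
  also have "\<dots> = - sup (- (c *\<^sub>R x)) (- (c *\<^sub>R y))" by (simp only: scaleR_minus_right)
  also have "\<dots> = inf (c *\<^sub>R x) (c *\<^sub>R y)" by (simp only: inf_eq_neg_sup)
  finally show ?thesis .
qed

lemma inf_bound: "inf a e \<le> inf a b + sup (e - b) (0::'c::lattice_ab_group_add)"
proof -
  define s where "s = sup (e - b) 0"
  have s0: "0 \<le> s" unfolding s_def by (rule sup_ge2)
  have "e - b \<le> s" unfolding s_def by (rule sup_ge1)
  hence e: "e \<le> b + s" by (simp only: diff_le_eq add.commute)
  have a: "a \<le> a + s" using s0 by (simp only: le_add_same_cancel1)
  have "inf a e \<le> inf (a + s) (b + s)" by (rule inf_mono[OF a e])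
  also have "\<dots> = inf a b + s" by (rule add_inf_distrib_right[symmetric])
  finally show ?thesis unfolding s_def .
qed

lemma disj_add: "inf x y = 0 \<Longrightarrow> x + y = sup x (y::'c::lattice_ab_group_add)"
proof -
  assume "inf x y = 0"
  have "x + y = sup x y + inf x y" by (rule add_eq_inf_sup)
  thus ?thesis using \<open>inf x y = 0\<close> by (simp only: add_0_right)
qed

lemma sup_pn: "sup u 0 = u + sup (- u) (0::'c::lattice_ab_group_add)"
  by (simp add: add_sup_distrib_left sup_commute)

lemma pn_disj: "inf (sup u 0) (sup (- u) 0) = (0::'c::lattice_ab_group_add)"
proof -
  define N where "N = sup (- u) 0"
  have 2: "N = - inf u 0" unfolding N_def by (simp add: neg_inf_eq_sup)
  have 1: "sup u 0 = u + N" unfolding N_def by (rule sup_pn)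
  have "inf (sup u 0) N = inf (u + N) (0 + N)" by (simp only: 1 add_0_left)
  also have "\<dots> = inf u 0 + N" by (rule add_inf_distrib_right[symmetric])
  also have "\<dots> = inf u 0 + - inf u 0" by (simp only: 2)
  also have "\<dots> = 0" by (rule add.right_inverse)
  finally show ?thesis unfolding N_def .
qed

lemma lemR:
  assumes "0 \<le> x" "0 \<le> m" "0 \<le> e" "inf x m = 0" "x \<le> e + m"
  shows "x \<le> (e::'c::lattice_ab_group_add)"
proof -
  define y where "y = x - e"
  have "x \<le> m + e" using assms(5) by (simp only: add.commute)
  hence ym: "y \<le> m" unfolding y_def by (simp only: diff_le_eq)
  have "x - e \<le> x - 0" by (rule diff_left_mono[OF assms(3)])
  hence yx: "y \<le> x" unfolding y_def by (simp only: diff_0_right)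
  have "sup y 0 \<le> inf x m" by (rule le_infI[OF sup_least[OF yx assms(1)] sup_least[OF ym assms(2)]])
  hence "sup y 0 \<le> 0" by (simp only: assms(4))
  hence "y \<le> 0" by (rule le_supE)
  thus ?thesis unfolding y_def by (simp only: diff_le_0_iff_le)
qed

lemma disj_scale:
  assumes "0 \<le> p" "0 \<le> b" "inf p b = 0" "0 \<le> c"
  shows "inf (c *\<^sub>R p) b = (0::'c::vector_lattice)"
proof -
  have c1: "0 \<le> c + 1" using assms(4) by simp
  have "c *\<^sub>R p \<le> (c + 1) *\<^sub>R p" by (rule scaleR_right_mono[OF _ assms(1)]) simp
  moreover have "1 *\<^sub>R b \<le> (c + 1) *\<^sub>R b" by (rule scaleR_right_mono[OF _ assms(2)]) (simp add: assms(4))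
  hence "b \<le> (c + 1) *\<^sub>R b" by (simp only: scaleR_one)
  ultimately have "inf (c *\<^sub>R p) b \<le> inf ((c+1) *\<^sub>R p) ((c+1) *\<^sub>R b)" by (rule inf_mono)
  also have "\<dots> = (c+1) *\<^sub>R inf p b" by (rule scale_inf[OF c1, symmetric])
  also have "\<dots> = 0" by (simp only: assms(3) scaleR_zero_right)
  finally have 1: "inf (c *\<^sub>R p) b \<le> 0" .
  have "0 \<le> c *\<^sub>R p" by (rule scaleR_nonneg_nonneg[OF assms(4,1)])
  hence "0 \<le> inf (c *\<^sub>R p) b" using assms(2) by (rule le_infI)
  with 1 show ?thesis by (rule order_antisym)
qed

context
  fixes T :: "'a::vector_lattice \<Rightarrow> 'b::archimedean_vector_lattice"
  assumes hom: "lattice_hom T"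
begin

lemma P_uo:
  assumes P: "\<forall>D. D \<noteq> {} \<and> down_directed D \<and> is_inf D 0 \<longrightarrow> is_inf (T`D) 0"
  shows "uo_continuous T"
  unfolding uo_continuous_def
proof (intro allI impI)
  fix F :: "'a filter" and f assume "F \<noteq> bot \<and> uoconv F f"
  hence U: "\<And>g. 0 \<le> g \<Longrightarrow> oconv (filtermap (\<lambda>x. inf \<bar>x - f\<bar> g) F) 0"
    unfolding uoconv_def by blast
  show "uoconv (filtermap T F) (T f)"
    unfolding uoconv_def
  proof (intro allI impI)
    fix e :: 'b assume e0: "0 \<le> e"
    show "oconv (filtermap (\<lambda>y. inf \<bar>y - T f\<bar> e) (filtermap T F)) 0"
    proof (cases "\<forall>x::'a. x = 0")
      case True
      have Tz: "T x = 0" for x using True h0[OF hom] by metis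
      show ?thesis unfolding oconv_on_def
        using inf_absorb1[OF e0] by (intro exI[of _ "{0}"]) (simp add: is_inf_on_def eventually_filtermap Tz)
    next
      case False
      have nonempty: "G \<noteq> {}" if "is_inf G (0::'a)" for G
        using False is_inf_empty_triv that by blast
      define A where "A = {u. \<exists>g k G. 0 \<le> g \<and> is_inf G 0 \<and>
          (\<forall>k\<in>G. eventually (\<lambda>y. \<bar>y - 0\<bar> \<le> k) (filtermap (\<lambda>x. inf \<bar>x - f\<bar> g) F)) \<and>
          k \<in> G \<and> u = inf (T k + sup (e - T g) 0) e}"
      define B where "B = {u. \<exists>w. w \<in> disj_compl (range T) \<and> 0 \<le> w \<and> w \<le> e \<and> u = e - w}"
      have aT: "\<bar>T x - T f\<bar> = T \<bar>x - f\<bar>" for x by (simp add: habs[OF hom] hdiff[OF hom])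
      have evA: "eventually (\<lambda>x. inf \<bar>T x - T f\<bar> e \<le> u) F" if "u \<in> A" for u
      proof -
        obtain g k G where gk: "0 \<le> g" "k \<in> G"
          "\<forall>k\<in>G. eventually (\<lambda>y. \<bar>y - 0\<bar> \<le> k) (filtermap (\<lambda>x. inf \<bar>x - f\<bar> g) F)"
          "u = inf (T k + sup (e - T g) 0) e"
          using \<open>u \<in> A\<close> unfolding A_def by blast
        have "eventually (\<lambda>x. inf \<bar>x - f\<bar> g \<le> k) F"
          using gk(2,3) unfolding eventually_filtermap
          by (auto elim!: eventually_mono simp: abs_of_nonneg gk(1))
        thus ?thesis
        proof (rule eventually_mono)
          fix x assume "inf \<bar>x - f\<bar> g \<le> k"
          hence "T (inf \<bar>x - f\<bar> g) \<le> T k" by (rule hmono[OF hom])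
          hence 1: "inf \<bar>T x - T f\<bar> (T g) \<le> T k" by (simp add: hinf[OF hom] aT)
          have "inf \<bar>T x - T f\<bar> e \<le> inf \<bar>T x - T f\<bar> (T g) + sup (e - T g) 0" by (rule inf_bound)
          also have "\<dots> \<le> T k + sup (e - T g) 0" using 1 by simp
          finally show "inf \<bar>T x - T f\<bar> e \<le> u" unfolding gk(4) by simp
        qed
      qed
      have evB: "inf \<bar>T x - T f\<bar> e \<le> u" if "u \<in> B" for u x
      proof -
        obtain w where w: "w \<in> disj_compl (range T)" "0 \<le> w" "w \<le> e" "u = e - w"
          using \<open>u \<in> B\<close> unfolding B_def by blast
        define a where "a = \<bar>T x - T f\<bar>"
        have "a \<in> range T" unfolding a_def aT by simp
        hence "inf \<bar>w\<bar> \<bar>a\<bar> = 0" using w(1) unfolding disj_compl_def by blast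
        hence "inf w a = 0" using w(2) by (simp add: a_def)
        hence iaw: "inf a w = 0" by (simp only: inf_commute)
        have "inf (inf a e) w \<le> inf a w" by (rule inf_mono[OF inf_le1 order_refl])
        hence 1: "inf (inf a e) w \<le> 0" by (simp only: iaw)
        have "0 \<le> inf a e" unfolding a_def by (rule le_infI[OF abs_ge_zero e0])
        hence "0 \<le> inf (inf a e) w" using w(2) by (rule le_infI)
        with 1 have "inf (inf a e) w = 0" by (rule order_antisym)
        hence "inf a e + w = sup (inf a e) w" by (rule disj_add)
        also have "\<dots> \<le> e" using w(3) by simp
        finally show ?thesis unfolding w(4) a_def by (simp add: le_diff_eq)
      qed
      have "is_inf (A \<union> B) 0"
        unfolding is_inf_on_def
      proof (intro conjI ballI allI impI)
        fix u assume "u \<in> A \<union> B"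
        thus "0 \<le> u"
        proof
          assume "u \<in> A"
          then obtain g k G where gk: "0 \<le> g" "k \<in> G" "is_inf G 0"
            "u = inf (T k + sup (e - T g) 0) e"
            unfolding A_def by blast
          have "0 \<le> T k" using hpos[OF hom] is_inf_ge0[OF gk(3,2)] .
          thus ?thesis using gk(4) e0 by (simp add: add_nonneg_nonneg)
        next
          assume "u \<in> B" thus ?thesis unfolding B_def by auto
        qed
      next
        fix z assume z: "\<forall>s\<in>A \<union> B. z \<le> s"
        define p where "p = sup z 0"
        have p0: "0 \<le> p" unfolding p_def by simp
        have zp: "z \<le> p" unfolding p_def by (rule sup_ge1)
        have zc: "z \<le> sup (e - T g) 0" if g0: "0 \<le> g" for g
        proof -
          obtain G where G: "is_inf G 0"
            "\<forall>k\<in>G. eventually (\<lambda>y. \<bar>y - 0\<bar> \<le> k) (filtermap (\<lambda>x. inf \<bar>x - f\<bar> g) F)"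
            using U[OF g0] unfolding oconv_on_def by blast
          have "z - sup (e - T g) 0 \<le> t" if "t \<in> T`G" for t
          proof -
            obtain k where k: "k \<in> G" "t = T k" using \<open>t \<in> T`G\<close> by blast
            have "inf (T k + sup (e - T g) 0) e \<in> A" unfolding A_def using g0 G k(1) by blast
            hence "z \<le> inf (T k + sup (e - T g) 0) e" using z by blast
            hence "z \<le> T k + sup (e - T g) 0" by (rule le_infE)
            thus ?thesis using k(2) by (simp only: diff_le_eq)
          qed
          moreover have "is_inf (T`G) (T 0)" using P_inf[OF hom P nonempty[OF G(1)] G(1)] .
          ultimately have "z - sup (e - T g) 0 \<le> 0" unfolding is_inf_on_def h0[OF hom] by blast
          thus ?thesis by (simp only: diff_le_0_iff_le)
        qed
        have perp: "inf p (T h) = 0" if h0': "0 \<le> h" for h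
        proof -
          define a where "a = inf p (T h)"
          have a0: "0 \<le> a" unfolding a_def by (rule le_infI[OF p0 hpos[OF hom h0']])
          have "real (Suc n) *\<^sub>R a \<le> e" for n
          proof -
            define c where "c = sup (e - real n *\<^sub>R T h) 0"
            have "0 \<le> real n *\<^sub>R h" using h0' by (intro scaleR_nonneg_nonneg) auto
            hence "z \<le> sup (e - T (real n *\<^sub>R h)) 0" by (rule zc)
            hence zc': "z \<le> c" unfolding c_def by (simp only: hscale[OF hom])
            have "0 \<le> c" unfolding c_def by (rule sup_ge2)
            with zc' have pc: "p \<le> c" unfolding p_def by (rule sup_least)
            define u where "u = e - real n *\<^sub>R T h"
            define m where "m = sup (- u) 0"
            have m0: "0 \<le> m" unfolding m_def by (rule sup_ge2)
            have ac: "a \<le> sup u 0" using pc unfolding a_def c_def u_def by (rule le_infI1)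
            have "inf a m \<le> inf (sup u 0) m" using ac by (rule inf_mono) simp
            hence "inf a m \<le> 0" unfolding m_def by (simp only: pn_disj)
            moreover have "0 \<le> inf a m" using a0 m0 by (rule le_infI)
            ultimately have am: "inf a m = 0" by (rule order_antisym)
            have "a \<le> T h" unfolding a_def by (rule inf_le2)
            hence "real n *\<^sub>R a \<le> real n *\<^sub>R T h" by (rule scaleR_left_mono) simp
            moreover have "a \<le> u + m"
            proof -
              have 1: "sup u 0 = u + m" unfolding m_def by (rule sup_pn)
              show ?thesis using ac by (simp only: 1)
            qed
            ultimately have "real n *\<^sub>R a + a \<le> real n *\<^sub>R T h + (u + m)" by (rule add_mono)
            moreover have "real n *\<^sub>R T h + (u + m) = e + m" unfolding u_def by (simp add: algebra_simps)
            ultimately have 2: "real n *\<^sub>R a + a \<le> e + m" by (rule ord_le_eq_trans)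
            have 3: "real (Suc n) *\<^sub>R a = real n *\<^sub>R a + a" by (simp add: scaleR_left_distrib)
            from 3 2 have le: "real (Suc n) *\<^sub>R a \<le> e + m" by (rule ord_eq_le_trans)
            have dj: "inf (real (Suc n) *\<^sub>R a) m = 0" by (rule disj_scale[OF a0 m0 am]) simp
            have nn: "0 \<le> real (Suc n) *\<^sub>R a" using a0 by (intro scaleR_nonneg_nonneg) auto
            show ?thesis by (rule lemR[OF nn m0 e0 dj le])
          qed
          hence "\<forall>n. real n *\<^sub>R a \<le> e"
          proof (intro allI)
            fix n assume S: "\<And>n. real (Suc n) *\<^sub>R a \<le> e"
            show "real n *\<^sub>R a \<le> e"
            proof (cases n)
              case 0 thus ?thesis using e0 by simp
            next
              case (Suc m) thus ?thesis using S[of m] by simp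
            qed
          qed
          thus ?thesis using archimedean[OF a0] unfolding a_def by blast
        qed
        have "real n *\<^sub>R p \<le> e" for n
        proof (induction n)
          case 0 thus ?case using e0 by simp
        next
          case (Suc n)
          define w where "w = real n *\<^sub>R p"
          have w0: "0 \<le> w" unfolding w_def using p0 by (intro scaleR_nonneg_nonneg) auto
          have "w \<in> disj_compl (range T)" unfolding disj_compl_def
          proof (intro CollectI ballI)
            fix t assume "t \<in> range T"
            then obtain y where y: "t = T y" by blast
            have "inf p (T \<bar>y\<bar>) = 0" by (rule perp) simp
            hence "inf w (T \<bar>y\<bar>) = 0" unfolding w_def
              by (intro disj_scale p0 hpos[OF hom]) auto
            thus "inf \<bar>w\<bar> \<bar>t\<bar> = 0" using w0 y by (simp add: habs[OF hom])
          qed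
          hence "e - w \<in> B" unfolding B_def using w0 Suc.IH w_def by blast
          hence "z \<le> e - w" using z by blast
          moreover have "0 \<le> e - w" using Suc.IH w_def by simp
          ultimately have "p \<le> e - w" unfolding p_def by simp
          thus ?case unfolding w_def by (simp add: scaleR_left_distrib le_diff_eq add.commute)
        qed
        hence "p = 0" using archimedean[OF p0] by blast
        thus "z \<le> 0" using zp by simp
      qed simp
      moreover have "\<forall>u\<in>A \<union> B. eventually (\<lambda>v. \<bar>v - 0\<bar> \<le> u) (filtermap (\<lambda>y. inf \<bar>y - T f\<bar> e) (filtermap T F))"
      proof
        fix u assume "u \<in> A \<union> B"
        hence "eventually (\<lambda>x. inf \<bar>T x - T f\<bar> e \<le> u) F" using evA evB by auto
        thus "eventually (\<lambda>v. \<bar>v - 0\<bar> \<le> u) (filtermap (\<lambda>y. inf \<bar>y - T f\<bar> e) (filtermap T F))"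
          unfolding eventually_filtermap using e0 by (auto elim!: eventually_mono simp: abs_of_nonneg)
      qed
      ultimately show ?thesis unfolding oconv_on_def by blast
    qed
  qed
qed

end
theorem theorem5p2:
  fixes T :: "'f::archimedean_vector_lattice \<Rightarrow> 'e::archimedean_vector_lattice"
  assumes "lattice_hom T"
  shows
   "((\<forall>D. D \<noteq> {} \<and> down_directed D \<and> is_inf D 0 \<longrightarrow> is_inf (T ` D) 0)
     \<longleftrightarrow> ((\<forall>G g. G \<noteq> {} \<and> is_sup G g \<longrightarrow> is_sup (T ` G) (T g)) \<and>
          (\<forall>G g. G \<noteq> {} \<and> is_inf G g \<longrightarrow> is_inf (T ` G) (T g))))
    \<and> ((\<forall>D. D \<noteq> {} \<and> down_directed D \<and> is_inf D 0 \<longrightarrow> is_inf (T ` D) 0)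
     \<longleftrightarrow> order_continuous T)
    \<and> ((\<forall>D. D \<noteq> {} \<and> down_directed D \<and> is_inf D 0 \<longrightarrow> is_inf (T ` D) 0)
     \<longleftrightarrow> (\<exists>H. vl_ideal H \<and> order_continuous_on H T
              \<and> range T \<subseteq> disj_compl (disj_compl (T ` H))))
    \<and> ((\<forall>D. D \<noteq> {} \<and> down_directed D \<and> is_inf D 0 \<longrightarrow> is_inf (T ` D) 0)
     \<longleftrightarrow> uo_continuous T)"
proof -
  have hom: "lattice_hom T" by (rule assms)
  let ?P = "\<forall>D. D \<noteq> {} \<and> down_directed D \<and> is_inf D 0 \<longrightarrow> is_inf (T ` D) 0"
  have 1: "?P \<longleftrightarrow> ((\<forall>G g. G \<noteq> {} \<and> is_sup G g \<longrightarrow> is_sup (T ` G) (T g)) \<and>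
          (\<forall>G g. G \<noteq> {} \<and> is_inf G g \<longrightarrow> is_inf (T ` G) (T g)))"
  proof
    assume P: ?P
    show "(\<forall>G g. G \<noteq> {} \<and> is_sup G g \<longrightarrow> is_sup (T ` G) (T g)) \<and>
          (\<forall>G g. G \<noteq> {} \<and> is_inf G g \<longrightarrow> is_inf (T ` G) (T g))"
      using P_sup[OF hom P] P_inf[OF hom P] by blast
  next
    assume "(\<forall>G g. G \<noteq> {} \<and> is_sup G g \<longrightarrow> is_sup (T ` G) (T g)) \<and>
          (\<forall>G g. G \<noteq> {} \<and> is_inf G g \<longrightarrow> is_inf (T ` G) (T g))"
    hence I: "\<And>G g. G \<noteq> {} \<Longrightarrow> is_inf G g \<Longrightarrow> is_inf (T ` G) (T g)" by blast
    show ?P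
    proof (intro allI impI, elim conjE)
      fix D :: "'f set" assume "D \<noteq> {}" "is_inf D 0"
      thus "is_inf (T ` D) 0" using I[of D 0] h0[OF hom] by simp
    qed
  qed
  have 2: "?P \<longleftrightarrow> order_continuous T"
  proof
    assume ?P thus "order_continuous T" by (rule P_oc[OF hom])
  next
    assume "order_continuous T"
    then obtain H where "vl_ideal H" "order_continuous_on H T" "range T \<subseteq> disj_compl (disj_compl (T ` H))"
      using oc_iv[OF hom] by blast
    thus ?P by (rule iv_P[OF hom])
  qed
  have 3: "?P \<longleftrightarrow> (\<exists>H. vl_ideal H \<and> order_continuous_on H T
              \<and> range T \<subseteq> disj_compl (disj_compl (T ` H)))"
  proof
    assume ?P thus "\<exists>H. vl_ideal H \<and> order_continuous_on H T
              \<and> range T \<subseteq> disj_compl (disj_compl (T ` H))" by (rule oc_iv[OF hom P_oc[OF hom]])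
  next
    assume "\<exists>H. vl_ideal H \<and> order_continuous_on H T
              \<and> range T \<subseteq> disj_compl (disj_compl (T ` H))"
    then obtain H where "vl_ideal H" "order_continuous_on H T" "range T \<subseteq> disj_compl (disj_compl (T ` H))"
      by blast
    thus ?P by (rule iv_P[OF hom])
  qed
  have 4: "?P \<longleftrightarrow> uo_continuous T"
    using P_uo[OF hom] uo_P[OF hom] by (intro iffI) auto
  show ?thesis using 1 2 3 4 by (intro conjI)
qed

end
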